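(* Let $\{E_\lambda:\lambda\in\Lambda\}$ be a family of real Banach spaces and let $E=[\bigoplus_{\lambda\in\Lambda}E_\lambda]_F$ where $F$ is one of $c_0$, $\ell_\infty$ or $\ell_1$. Then $E$ has the property $( ** )$ if and only if each $E_\lambda$ has the property $( ** )$.
   Context: All Banach spaces are real. For a Banach space $Z$, $B_Z$, $S_Z$ and $Z^*$ denote its closed unit ball, unit sphere and dual. For $z^*\in S_{Z^*}$ and $0<\alpha<1$, the slice is $S(z^*,\alpha)=\{z\in B_Z: z^*(z)>1-\alpha\}$, and $-S(z^*,\alpha)=\{-z: z\in S(z^*,\alpha)\}$. A Banach space $Z$ has the property $( ** )$ if for all $z_1,z_2\in S_Z$ and every $\varepsilon>0$ there exists $z^*\in S_{Z^*}$ such that, writing $S=S(z^*,\varepsilon)$, one has $z_1\in S$ and $\operatorname{dist}(z_2,S)+\operatorname{dist}(z_2,-S)<2+\varepsilon$. The $c_0$-sum (resp. $\ell_\infty$-sum, $\ell_1$-sum) $[\bigoplus_\lambda E_\lambda]_F$ is the space of families $(x_\lambda)$ with $x_\lambda\in E_\lambda$ such that $(\|x_\lambda\|)_\lambda\in c_0(\Lambda)$ (resp. $\ell_\infty(\Lambda)$, $\ell_1(\Lambda)$), normed by the $F$-norm of $(\|x_\lambda\|)_\lambda$. *)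

theory Defs
  imports "HOL-Analysis.Analysis"
begin

text \<open>An abstract real normed space is given by a carrier X inside some type,
  an addition add, a scalar multiplication sc and a norm function N.
  Negation is sc (-1) and subtraction z - s is add z (sc (-1) s).\<close>

definition dual_sphere ::
  "'a set \<Rightarrow> ('a \<Rightarrow> 'a \<Rightarrow> 'a) \<Rightarrow> (real \<Rightarrow> 'a \<Rightarrow> 'a) \<Rightarrow> ('a \<Rightarrow> real) \<Rightarrow> ('a \<Rightarrow> real) set" where
  "dual_sphere X add sc N =
     {f. (\<forall>x\<in>X. \<forall>y\<in>X. f (add x y) = f x + f y)
       \<and> (\<forall>x\<in>X. \<forall>c. f (sc c x) = c * f x)
       \<and> bdd_above {\<bar>f x\<bar> | x. x \<in> X \<and> N x \<le> 1}
       \<and> Sup {\<bar>f x\<bar> | x. x \<in> X \<and> N x \<le> 1} = 1}"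

definition slice :: "'a set \<Rightarrow> ('a \<Rightarrow> real) \<Rightarrow> ('a \<Rightarrow> real) \<Rightarrow> real \<Rightarrow> 'a set" where
  "slice X N f \<alpha> = {z \<in> X. N z \<le> 1 \<and> f z > 1 - \<alpha>}"

definition set_dist ::
  "('a \<Rightarrow> 'a \<Rightarrow> 'a) \<Rightarrow> (real \<Rightarrow> 'a \<Rightarrow> 'a) \<Rightarrow> ('a \<Rightarrow> real) \<Rightarrow> 'a \<Rightarrow> 'a set \<Rightarrow> real" where
  "set_dist add sc N z S = Inf {N (add z (sc (-1) s)) | s. s \<in> S}"

text \<open>Property (**).\<close>
definition prop_ss ::
  "'a set \<Rightarrow> ('a \<Rightarrow> 'a \<Rightarrow> 'a) \<Rightarrow> (real \<Rightarrow> 'a \<Rightarrow> 'a) \<Rightarrow> ('a \<Rightarrow> real) \<Rightarrow> bool" where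
  "prop_ss X add sc N \<longleftrightarrow>
     (\<forall>z1\<in>X. \<forall>z2\<in>X. N z1 = 1 \<longrightarrow> N z2 = 1 \<longrightarrow>
       (\<forall>\<epsilon>>0. \<exists>f\<in>dual_sphere X add sc N.
          z1 \<in> slice X N f \<epsilon> \<and>
          set_dist add sc N z2 (slice X N f \<epsilon>)
            + set_dist add sc N z2 (sc (-1) ` slice X N f \<epsilon>) < 2 + \<epsilon>))"

text \<open>Property (**) for a closed linear subspace of a real Banach space, with the induced norm.\<close>
abbreviation prop_ss_sub :: "'b::real_normed_vector set \<Rightarrow> bool" where
  "prop_ss_sub X \<equiv> prop_ss X (+) scaleR norm"

datatype sum_kind = C0 | Linf | L1

definition sum_carrier :: "sum_kind \<Rightarrow> 'l set \<Rightarrow> ('l \<Rightarrow> 'b::real_normed_vector set) \<Rightarrow> ('l \<Rightarrow> 'b) set" where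
  "sum_carrier F \<Lambda> E =
     {x. (\<forall>l\<in>\<Lambda>. x l \<in> E l) \<and> (\<forall>l. l \<notin> \<Lambda> \<longrightarrow> x l = 0) \<and>
         (case F of
            C0 \<Rightarrow> (\<forall>\<epsilon>>0. finite {l \<in> \<Lambda>. norm (x l) \<ge> \<epsilon>})
          | Linf \<Rightarrow> bdd_above ((\<lambda>l. norm (x l)) ` \<Lambda>)
          | L1 \<Rightarrow> (\<lambda>l. norm (x l)) summable_on \<Lambda>)}"

definition sum_norm :: "sum_kind \<Rightarrow> 'l set \<Rightarrow> ('l \<Rightarrow> 'b::real_normed_vector) \<Rightarrow> real" where
  "sum_norm F \<Lambda> x =
     (case F of
        L1 \<Rightarrow> infsum (\<lambda>l. norm (x l)) \<Lambda>
      | _ \<Rightarrow> Sup (insert 0 ((\<lambda>l. norm (x l)) ` \<Lambda>)))"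

definition sum_add :: "('l \<Rightarrow> 'b::real_vector) \<Rightarrow> ('l \<Rightarrow> 'b) \<Rightarrow> ('l \<Rightarrow> 'b)" where
  "sum_add x y = (\<lambda>l. x l + y l)"

definition sum_scale :: "real \<Rightarrow> ('l \<Rightarrow> 'b::real_vector) \<Rightarrow> ('l \<Rightarrow> 'b)" where
  "sum_scale c x = (\<lambda>l. c *\<^sub>R x l)"

end

theory Submission
  imports Defs
begin


lemma zero_in_carrier:
  assumes "\<forall>l\<in>\<Lambda>. subspace (E l)"
  shows "(\<lambda>_. 0) \<in> sum_carrier F \<Lambda> E"
  using assms by (cases F) (auto simp: sum_carrier_def subspace_0)

lemma upd_in_carrier:
  assumes x: "x \<in> sum_carrier F \<Lambda> E" and l: "l \<in> \<Lambda>" and a: "a \<in> E l"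
  shows "x(l:=a) \<in> sum_carrier F \<Lambda> E"
proof (cases F)
  case C0
  have sub: "\<And>e. {k\<in>\<Lambda>. e \<le> norm ((x(l:=a)) k)} \<subseteq> insert l {k\<in>\<Lambda>. e \<le> norm (x k)}" by auto
  have "\<forall>e>0. finite {k\<in>\<Lambda>. e \<le> norm ((x(l:=a)) k)}"
  proof (intro allI impI)
    fix e :: real assume "e > 0"
    then have "finite {k\<in>\<Lambda>. e \<le> norm (x k)}" using x C0 by (simp add: sum_carrier_def)
    then show "finite {k\<in>\<Lambda>. e \<le> norm ((x(l:=a)) k)}"
      using sub[of e] by (meson finite_insert finite_subset)
  qed
  then show ?thesis using x l a C0 unfolding sum_carrier_def by auto
next
  case Linf
  have "(\<lambda>k. norm ((x(l:=a)) k)) ` \<Lambda> \<subseteq> insert (norm a) ((\<lambda>k. norm (x k)) ` \<Lambda>)" by auto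
  moreover have "bdd_above ((\<lambda>k. norm (x k)) ` \<Lambda>)" using x Linf by (simp add: sum_carrier_def)
  ultimately have "bdd_above ((\<lambda>k. norm ((x(l:=a)) k)) ` \<Lambda>)"
    by (meson bdd_above_insert bdd_above_mono)
  then show ?thesis using x l a Linf unfolding sum_carrier_def by auto
next
  case L1
  have s: "(\<lambda>k. norm (x k)) summable_on \<Lambda>" using x L1 by (simp add: sum_carrier_def)
  have "(\<lambda>k. norm (x k)) summable_on (\<Lambda> - {l})"
    using s by (rule summable_on_subset_banach) auto
  then have "(\<lambda>k. norm ((x(l:=a)) k)) summable_on (\<Lambda> - {l})"
    by (rule summable_on_cong[THEN iffD1, rotated]) auto
  then have "(\<lambda>k. norm ((x(l:=a)) k)) summable_on insert l (\<Lambda> - {l})"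
    by (rule summable_on_insert_iff[THEN iffD2])
  moreover have "insert l (\<Lambda> - {l}) = \<Lambda>" using l by auto
  ultimately have "(\<lambda>k. norm ((x(l:=a)) k)) summable_on \<Lambda>" by (simp only:)
  then show ?thesis using x l a L1 unfolding sum_carrier_def by auto
qed

lemma carrier_bdd:
  assumes x: "x \<in> sum_carrier F \<Lambda> E" and F: "F \<noteq> L1"
  shows "bdd_above ((\<lambda>l. norm (x l)) ` \<Lambda>)"
proof (cases F)
  case C0
  then have fin: "finite {l\<in>\<Lambda>. 1 \<le> norm (x l)}" using x by (simp add: sum_carrier_def)
  have "(\<lambda>l. norm (x l)) ` \<Lambda> \<subseteq> {..1} \<union> (\<lambda>l. norm (x l)) ` {l\<in>\<Lambda>. 1 \<le> norm (x l)}" by auto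
  moreover have "bdd_above ({..1} \<union> (\<lambda>l. norm (x l)) ` {l\<in>\<Lambda>. 1 \<le> norm (x l)})"
    using fin by simp
  ultimately show ?thesis by (rule bdd_above_mono[rotated])
next
  case Linf then show ?thesis using x by (simp add: sum_carrier_def)
qed (use F in auto)

lemma sum_norm_sup:
  "F \<noteq> L1 \<Longrightarrow> sum_norm F \<Lambda> x = Sup (insert 0 ((\<lambda>l. norm (x l)) ` \<Lambda>))"
  by (cases F) (auto simp: sum_norm_def)

lemma sup_norm_le_iff:
  assumes x: "x \<in> sum_carrier F \<Lambda> E" and F: "F \<noteq> L1"
  shows "sum_norm F \<Lambda> x \<le> r \<longleftrightarrow> 0 \<le> r \<and> (\<forall>l\<in>\<Lambda>. norm (x l) \<le> r)"
  unfolding sum_norm_sup[OF F]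
  using carrier_bdd[OF x F] by (subst cSup_le_iff) auto

lemma sup_norm_ge:
  assumes x: "x \<in> sum_carrier F \<Lambda> E" and F: "F \<noteq> L1" and l: "l \<in> \<Lambda>"
  shows "norm (x l) \<le> sum_norm F \<Lambda> x"
  unfolding sum_norm_sup[OF F]
  using carrier_bdd[OF x F] l by (intro cSup_upper) auto

lemma sup_norm_nonneg:
  assumes x: "x \<in> sum_carrier F \<Lambda> E" and F: "F \<noteq> L1"
  shows "0 \<le> sum_norm F \<Lambda> x"
  unfolding sum_norm_sup[OF F]
  using carrier_bdd[OF x F] by (intro cSup_upper) auto

lemma l1_split:
  assumes s: "(\<lambda>k. norm (x k)) summable_on (\<Lambda> - A)" and A: "finite A" "A \<subseteq> \<Lambda>"
  shows "infsum (\<lambda>k. norm (x k)) \<Lambda> = (\<Sum>k\<in>A. norm (x k)) + infsum (\<lambda>k. norm (x k)) (\<Lambda> - A)"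
proof -
  have "\<Lambda> = A \<union> (\<Lambda> - A)" using A by auto
  then have "infsum (\<lambda>k. norm (x k)) \<Lambda> = infsum (\<lambda>k. norm (x k)) (A \<union> (\<Lambda> - A))" by simp
  also have "\<dots> = infsum (\<lambda>k. norm (x k)) A + infsum (\<lambda>k. norm (x k)) (\<Lambda> - A)"
    using A s by (intro infsum_Un_disjoint) (auto intro: summable_on_finite)
  finally show ?thesis using A by (simp add: infsum_finite)
qed

lemma l1_summable:
  "x \<in> sum_carrier L1 \<Lambda> E \<Longrightarrow> (\<lambda>k. norm (x k)) summable_on B \<Longrightarrow> True" by simp

lemma l1_norm_ge:
  assumes x: "x \<in> sum_carrier L1 \<Lambda> E" and l: "l \<in> \<Lambda>"
  shows "norm (x l) \<le> sum_norm L1 \<Lambda> x"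
proof -
  have s: "(\<lambda>k. norm (x k)) summable_on \<Lambda>" using x by (simp add: sum_carrier_def)
  have "(\<lambda>k. norm (x k)) summable_on (\<Lambda> - {l})" using s by (rule summable_on_subset_banach) auto
  from l1_split[of x \<Lambda> "{l}", OF this] l
  have "sum_norm L1 \<Lambda> x = norm (x l) + infsum (\<lambda>k. norm (x k)) (\<Lambda> - {l})"
    unfolding sum_norm_def by simp
  moreover have "0 \<le> infsum (\<lambda>k. norm (x k)) (\<Lambda> - {l})" by (simp add: infsum_nonneg)
  ultimately show ?thesis by simp
qed

lemma comp_le_norm:
  assumes x: "x \<in> sum_carrier F \<Lambda> E" and l: "l \<in> \<Lambda>"
  shows "norm (x l) \<le> sum_norm F \<Lambda> x"
  using sup_norm_ge[OF x _ l] l1_norm_ge[of x \<Lambda> E l] x l by (cases F) auto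

lemma norm_nonneg_sum:
  assumes x: "x \<in> sum_carrier F \<Lambda> E"
  shows "0 \<le> sum_norm F \<Lambda> x"
  using sup_norm_nonneg[OF x] x by (cases F) (auto simp: sum_norm_def infsum_nonneg)

lemma e_in_carrier:
  assumes "\<forall>k\<in>\<Lambda>. subspace (E k)" "l \<in> \<Lambda>" "a \<in> E l"
  shows "(\<lambda>_. 0)(l:=a) \<in> sum_carrier F \<Lambda> E"
  using upd_in_carrier[OF zero_in_carrier[OF assms(1)] assms(2,3)] .

lemma l1_norm_split:
  assumes x: "x \<in> sum_carrier L1 \<Lambda> E" and A: "finite A" "A \<subseteq> \<Lambda>"
  shows "sum_norm L1 \<Lambda> x = (\<Sum>k\<in>A. norm (x k)) + infsum (\<lambda>k. norm (x k)) (\<Lambda> - A)"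
proof -
  have s: "(\<lambda>k. norm (x k)) summable_on \<Lambda>" using x by (simp add: sum_carrier_def)
  have "(\<lambda>k. norm (x k)) summable_on (\<Lambda> - A)" using s by (rule summable_on_subset_banach) auto
  from l1_split[of x \<Lambda> A, OF this A] show ?thesis unfolding sum_norm_def by simp
qed

lemma l1_norm_split1:
  assumes x: "x \<in> sum_carrier L1 \<Lambda> E" and l: "l \<in> \<Lambda>"
  shows "sum_norm L1 \<Lambda> x = norm (x l) + infsum (\<lambda>k. norm (x k)) (\<Lambda> - {l})"
  using l1_norm_split[OF x, of "{l}"] l by simp

lemma norm_e:
  assumes sub: "\<forall>k\<in>\<Lambda>. subspace (E k)" and l: "l \<in> \<Lambda>" and a: "a \<in> E l"
  shows "sum_norm F \<Lambda> ((\<lambda>_. 0)(l:=a)) = norm a"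
proof (cases "F = L1")
  case True
  have "infsum (\<lambda>k. norm (((\<lambda>_. 0)(l:=a)) k)) (\<Lambda> - {l}) = infsum (\<lambda>k. 0::real) (\<Lambda> - {l})"
    by (rule infsum_cong) auto
  then show ?thesis using l1_norm_split1[OF e_in_carrier[OF sub l a, of L1] l] True by simp
next
  case False
  have x: "(\<lambda>_. 0)(l:=a) \<in> sum_carrier F \<Lambda> E" by (rule e_in_carrier[OF sub l a])
  have "sum_norm F \<Lambda> ((\<lambda>_. 0)(l:=a)) \<le> norm a"
    using sup_norm_le_iff[OF x False] by auto
  moreover have "norm a \<le> sum_norm F \<Lambda> ((\<lambda>_. 0)(l:=a))"
    using comp_le_norm[OF x l] by simp
  ultimately show ?thesis by simp
qed

lemma same_norms_carrier:
  assumes x: "x \<in> sum_carrier F \<Lambda> E" and w1: "\<forall>k\<in>\<Lambda>. w k \<in> E k"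
    and w2: "\<forall>k. k \<notin> \<Lambda> \<longrightarrow> w k = 0" and w3: "\<forall>k. norm (w k) = norm (x k)"
  shows "w \<in> sum_carrier F \<Lambda> E" "sum_norm F \<Lambda> w = sum_norm F \<Lambda> x"
proof -
  have eq: "(\<lambda>k. norm (w k)) = (\<lambda>k. norm (x k))" using w3 by auto
  show "w \<in> sum_carrier F \<Lambda> E" using x w1 w2 unfolding sum_carrier_def by (cases F) (simp_all add: w3)
  show "sum_norm F \<Lambda> w = sum_norm F \<Lambda> x" unfolding sum_norm_def by (cases F) (simp_all add: w3)
qed

lemma ds_bound:
  assumes "f \<in> dual_sphere X add sc N" "x \<in> X" "N x \<le> 1"
  shows "\<bar>f x\<bar> \<le> 1"
proof -
  have "bdd_above {\<bar>f x\<bar> | x. x \<in> X \<and> N x \<le> 1}" "Sup {\<bar>f x\<bar> | x. x \<in> X \<and> N x \<le> 1} = 1"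
    using assms(1) by (auto simp: dual_sphere_def)
  then show ?thesis using assms(2,3) by (metis (mono_tags, lifting) cSup_upper mem_Collect_eq)
qed

lemma ds_norm_bound:
  assumes g: "g \<in> dual_sphere X (+) scaleR norm" and X: "subspace X" and a: "a \<in> X"
  shows "\<bar>g a\<bar> \<le> norm a"
proof (cases "a = 0")
  case True
  have "\<forall>x\<in>X. \<forall>c. g (c *\<^sub>R x) = c * g x" using g by (simp add: dual_sphere_def)
  then have "g (0 *\<^sub>R 0) = 0 * g 0" using X subspace_0 by blast
  then show ?thesis using True by simp
next
  case False
  have a1: "(1 / norm a) *\<^sub>R a \<in> X" using X a by (simp add: subspace_scale)
  have "\<bar>g ((1 / norm a) *\<^sub>R a)\<bar> \<le> 1" using ds_bound[OF g a1] False by simp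
  moreover have "g ((1 / norm a) *\<^sub>R a) = (1 / norm a) * g a" using g a by (simp add: dual_sphere_def)
  ultimately show ?thesis using False by (simp add: abs_mult divide_simps split: if_splits)
qed

lemma inf_le_inf:
  fixes A B :: "real set"
  assumes "\<forall>a\<in>A. 0 \<le> a" "B \<noteq> {}" "\<forall>b\<in>B. \<exists>a\<in>A. a \<le> b"
  shows "Inf A \<le> Inf B"
proof (rule cInf_greatest[OF assms(2)])
  fix b assume "b \<in> B"
  then obtain a where "a \<in> A" "a \<le> b" using assms(3) by blast
  moreover have "bdd_below A" using assms(1) by (meson bdd_below_def)
  ultimately show "Inf A \<le> b" by (meson cInf_lower order_trans)
qed



lemma comp_in:
  "x \<in> sum_carrier F \<Lambda> E \<Longrightarrow> l \<in> \<Lambda> \<Longrightarrow> x l \<in> E l"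
  by (simp add: sum_carrier_def)

lemma comp_out:
  "x \<in> sum_carrier F \<Lambda> E \<Longrightarrow> l \<notin> \<Lambda> \<Longrightarrow> x l = 0"
  by (simp add: sum_carrier_def)

lemma neg_in_carrier:
  assumes sub: "\<forall>k\<in>\<Lambda>. subspace (E k)" and x: "x \<in> sum_carrier F \<Lambda> E"
  shows "(\<lambda>k. - x k) \<in> sum_carrier F \<Lambda> E" "sum_norm F \<Lambda> (\<lambda>k. - x k) = sum_norm F \<Lambda> x"
  using same_norms_carrier[OF x, of "\<lambda>k. - x k"] sub comp_in[OF x] comp_out[OF x]
  by (auto intro: subspace_neg)

lemma forward_key:
  assumes sub: "\<forall>k\<in>\<Lambda>. subspace (E k)" and l: "l \<in> \<Lambda>"
    and f: "f \<in> dual_sphere (sum_carrier F \<Lambda> E) sum_add sum_scale (sum_norm F \<Lambda>)"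
    and z1: "z1 \<in> E l" "norm z1 = 1" and z2: "z2 \<in> E l"
    and x0: "x0 \<in> sum_carrier F \<Lambda> E" "sum_norm F \<Lambda> x0 \<le> 1"
  shows "\<exists>s0\<in>E l. norm s0 \<le> 1
     \<and> f x0 - 1 + f ((\<lambda>_. 0)(l:=z1)) \<le> f ((\<lambda>_. 0)(l:=s0))
     \<and> norm (z2 - s0) \<le> sum_norm F \<Lambda> (\<lambda>k. ((\<lambda>_. 0)(l:=z2)) k - x0 k)
     \<and> norm (z2 + s0) \<le> sum_norm F \<Lambda> (\<lambda>k. ((\<lambda>_. 0)(l:=z2)) k + x0 k)"
proof -
  let ?C = "sum_carrier F \<Lambda> E" and ?N = "sum_norm F \<Lambda>"
  define g where "g a = f ((\<lambda>_. 0)(l:=a))" for a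
  have fadd: "\<And>x y. x \<in> ?C \<Longrightarrow> y \<in> ?C \<Longrightarrow> f (sum_add x y) = f x + f y"
    using f by (simp add: dual_sphere_def)
  have fsc: "\<And>x c. x \<in> ?C \<Longrightarrow> f (sum_scale c x) = c * f x"
    using f by (simp add: dual_sphere_def)
  have subl: "subspace (E l)" using sub l by simp
  have eC: "\<And>a. a \<in> E l \<Longrightarrow> (\<lambda>_. 0)(l:=a) \<in> ?C" using e_in_carrier[OF sub l] by blast
  have g_add: "g (a + b) = g a + g b" if "a \<in> E l" "b \<in> E l" for a b
  proof -
    have "(\<lambda>_. 0)(l:=a+b) = sum_add ((\<lambda>_. 0)(l:=a)) ((\<lambda>_. 0)(l:=b))"
      by (auto simp: sum_add_def)
    then show ?thesis unfolding g_def using fadd eC that by simp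
  qed
  have g_sc: "g (c *\<^sub>R a) = c * g a" if "a \<in> E l" for a c
  proof -
    have "(\<lambda>_. 0)(l:=c *\<^sub>R a) = sum_scale c ((\<lambda>_. 0)(l:=a))"
      by (auto simp: sum_scale_def)
    then show ?thesis unfolding g_def using fsc eC that by simp
  qed
  define y where "y = x0(l:=0)"
  have yC: "y \<in> ?C" unfolding y_def using upd_in_carrier[OF x0(1) l] subl subspace_0 by blast
  have x0l: "x0 l \<in> E l" using comp_in[OF x0(1) l] .
  have x0dec: "x0 = sum_add ((\<lambda>_. 0)(l:=x0 l)) y" by (auto simp: sum_add_def y_def)
  have fx0: "f x0 = g (x0 l) + f y" unfolding g_def
    by (subst x0dec) (rule fadd[OF eC[OF x0l] yC])
  have updec: "y(l:=a) = sum_add ((\<lambda>_. 0)(l:=a)) y" for a by (auto simp: sum_add_def y_def)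
  have fyupd: "f (y(l:=a)) = g a + f y" if "a \<in> E l" for a
    unfolding g_def by (subst updec) (rule fadd[OF eC[OF that] yC])
  have z2x: "z2 - x0 l \<in> E l" "z2 + x0 l \<in> E l" using subl z2 x0l by (auto intro: subspace_diff subspace_add)
  have D1: "(\<lambda>k. ((\<lambda>_. 0)(l:=z2)) k - x0 k) = (\<lambda>k. - x0 k)(l := z2 - x0 l)" by auto
  have D2: "(\<lambda>k. ((\<lambda>_. 0)(l:=z2)) k + x0 k) = x0(l := z2 + x0 l)" by auto
  have D1C: "(\<lambda>k. ((\<lambda>_. 0)(l:=z2)) k - x0 k) \<in> ?C"
    unfolding D1 by (rule upd_in_carrier[OF neg_in_carrier(1)[OF sub x0(1)] l z2x(1)])
  have D2C: "(\<lambda>k. ((\<lambda>_. 0)(l:=z2)) k + x0 k) \<in> ?C"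
    unfolding D2 by (rule upd_in_carrier[OF x0(1) l z2x(2)])
  show ?thesis
  proof (cases "F = L1")
    case False
    have n0: "norm (x0 l) \<le> 1" using comp_le_norm[OF x0(1) l] x0(2) by simp
    have wC: "y(l:=z1) \<in> ?C" using upd_in_carrier[OF yC l z1(1)] .
    have "?N (y(l:=z1)) \<le> 1"
      unfolding sup_norm_le_iff[OF wC False]
    proof (intro conjI ballI)
      fix k assume k: "k \<in> \<Lambda>"
      show "norm ((y(l:=z1)) k) \<le> 1"
        using comp_le_norm[OF x0(1) k] x0(2) z1(2) by (auto simp: y_def)
    qed simp
    then have "\<bar>f (y(l:=z1))\<bar> \<le> 1" using ds_bound[OF f wC] by simp
    then have "g z1 + f y \<le> 1" using fyupd[OF z1(1)] by simp
    then have "f x0 - 1 + g z1 \<le> g (x0 l)" using fx0 by simp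
    moreover have "norm (z2 - x0 l) \<le> ?N (\<lambda>k. ((\<lambda>_. 0)(l:=z2)) k - x0 k)"
      using comp_le_norm[OF D1C l] by simp
    moreover have "norm (z2 + x0 l) \<le> ?N (\<lambda>k. ((\<lambda>_. 0)(l:=z2)) k + x0 k)"
      using comp_le_norm[OF D2C l] by simp
    ultimately show ?thesis using x0l n0 unfolding g_def by blast
  next
    case True
    define b where "b = ?N y"
    have Ny: "?N y = infsum (\<lambda>k. norm (x0 k)) (\<Lambda> - {l})"
    proof -
      have "?N y = norm (y l) + infsum (\<lambda>k. norm (y k)) (\<Lambda> - {l})"
        using l1_norm_split1[OF yC[unfolded True] l] True by simp
      also have "infsum (\<lambda>k. norm (y k)) (\<Lambda> - {l}) = infsum (\<lambda>k. norm (x0 k)) (\<Lambda> - {l})"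
        by (rule infsum_cong) (auto simp: y_def)
      moreover have "y l = 0" by (simp add: y_def)
      ultimately show ?thesis by simp
    qed
    have Nx0: "?N x0 = norm (x0 l) + b"
      using l1_norm_split1[OF x0(1)[unfolded True] l] True Ny b_def by simp
    have b0: "0 \<le> b" unfolding b_def by (rule norm_nonneg_sum[OF yC])
    have b1: "b \<le> 1" using Nx0 x0(2) norm_ge_zero[of "x0 l"] by linarith
    define s0 where "s0 = x0 l + b *\<^sub>R z1"
    have s0E: "s0 \<in> E l" unfolding s0_def using subl x0l z1(1) by (auto intro: subspace_add subspace_scale)
    have ns0: "norm s0 \<le> 1"
    proof -
      have "norm s0 \<le> norm (x0 l) + norm (b *\<^sub>R z1)" unfolding s0_def by (rule norm_triangle_ineq)
      also have "\<dots> = norm (x0 l) + b" using b0 z1(2) by simp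
      finally show ?thesis using Nx0 x0(2) by simp
    qed
    have z1b: "(1 - b) *\<^sub>R z1 \<in> E l" using subl z1(1) by (auto intro: subspace_scale)
    have wC: "y(l:=(1 - b) *\<^sub>R z1) \<in> ?C" using upd_in_carrier[OF yC l z1b] .
    have A: "?N (y(l:=(1 - b) *\<^sub>R z1)) = norm ((1 - b) *\<^sub>R z1) + infsum (\<lambda>k. norm ((y(l:=(1 - b) *\<^sub>R z1)) k)) (\<Lambda> - {l})"
      using l1_norm_split1[OF wC[unfolded True] l] True by simp
    have B: "infsum (\<lambda>k. norm ((y(l:=(1 - b) *\<^sub>R z1)) k)) (\<Lambda> - {l}) = b"
      unfolding b_def Ny by (rule infsum_cong) (auto simp: y_def)
    have C: "norm ((1 - b) *\<^sub>R z1) = 1 - b" using b1 z1(2) by simp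
    have "?N (y(l:=(1 - b) *\<^sub>R z1)) = 1" using A B C by linarith
    then have "\<bar>f (y(l:=(1 - b) *\<^sub>R z1))\<bar> \<le> 1" using ds_bound[OF f wC] by simp
    then have "(1 - b) * g z1 + f y \<le> 1" using fyupd[OF z1b] g_sc[OF z1(1)] by simp
    moreover have "g s0 = g (x0 l) + b * g z1" unfolding s0_def
      using g_add[OF x0l] g_sc[OF z1(1)] subl z1(1) by (simp add: subspace_scale)
    ultimately have gs0: "f x0 - 1 + g z1 \<le> g s0" using fx0 by (simp add: algebra_simps)
    have tail1: "infsum (\<lambda>k. norm (((\<lambda>_. 0)(l:=z2)) k - x0 k)) (\<Lambda> - {l}) = b"
      unfolding b_def Ny by (rule infsum_cong) auto
    have tail2: "infsum (\<lambda>k. norm (((\<lambda>_. 0)(l:=z2)) k + x0 k)) (\<Lambda> - {l}) = b"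
      unfolding b_def Ny by (rule infsum_cong) auto
    have ND1: "?N (\<lambda>k. ((\<lambda>_. 0)(l:=z2)) k - x0 k) = norm (z2 - x0 l) + b"
      using l1_norm_split1[OF D1C[unfolded True] l] True tail1 by simp
    have ND2: "?N (\<lambda>k. ((\<lambda>_. 0)(l:=z2)) k + x0 k) = norm (z2 + x0 l) + b"
      using l1_norm_split1[OF D2C[unfolded True] l] True tail2 by simp
    have "norm (z2 - s0) \<le> norm (z2 - x0 l) + norm (b *\<^sub>R z1)"
      unfolding s0_def by (metis diff_diff_eq norm_triangle_ineq4)
    then have d1: "norm (z2 - s0) \<le> ?N (\<lambda>k. ((\<lambda>_. 0)(l:=z2)) k - x0 k)"
      using ND1 b0 z1(2) by simp
    have "norm (z2 + s0) \<le> norm (z2 + x0 l) + norm (b *\<^sub>R z1)"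
      unfolding s0_def by (metis add.assoc norm_triangle_ineq)
    then have d2: "norm (z2 + s0) \<le> ?N (\<lambda>k. ((\<lambda>_. 0)(l:=z2)) k + x0 k)"
      using ND2 b0 z1(2) by simp
    show ?thesis using s0E ns0 gs0 d1 d2 unfolding g_def by blast
  qed
qed

lemma forward:
  assumes sub: "\<forall>k\<in>\<Lambda>. subspace (E k)"
    and P: "prop_ss (sum_carrier F \<Lambda> E) sum_add sum_scale (sum_norm F \<Lambda>)"
    and l: "l \<in> \<Lambda>"
  shows "prop_ss (E l) (+) scaleR norm"
  unfolding prop_ss_def
proof (intro ballI impI allI)
  let ?C = "sum_carrier F \<Lambda> E" and ?N = "sum_norm F \<Lambda>"
  fix z1 z2 and \<epsilon> :: real
  assume z1: "z1 \<in> E l" and z2: "z2 \<in> E l" and n1: "norm z1 = 1" and n2: "norm z2 = 1" and \<epsilon>: "\<epsilon> > 0"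
  define e' where "e' = min \<epsilon> 1 / 2"
  have e'0: "0 < e'" "e' \<le> 1/2" "2 * e' \<le> \<epsilon>" using \<epsilon> by (auto simp: e'_def)
  have subl: "subspace (E l)" using sub l by simp
  have eC: "\<And>a. a \<in> E l \<Longrightarrow> (\<lambda>_. 0)(l:=a) \<in> ?C" using e_in_carrier[OF sub l] by blast
  have eN: "\<And>a. a \<in> E l \<Longrightarrow> ?N ((\<lambda>_. 0)(l:=a)) = norm a" using norm_e[OF sub l] by blast
  obtain f where f: "f \<in> dual_sphere ?C sum_add sum_scale ?N"
    and fZ1: "(\<lambda>_. 0)(l:=z1) \<in> slice ?C ?N f e'"
    and fd: "set_dist sum_add sum_scale ?N ((\<lambda>_. 0)(l:=z2)) (slice ?C ?N f e')
           + set_dist sum_add sum_scale ?N ((\<lambda>_. 0)(l:=z2)) (sum_scale (-1) ` slice ?C ?N f e') < 2 + e'"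
  proof -
    have "?N ((\<lambda>_. 0)(l:=z1)) = 1" "?N ((\<lambda>_. 0)(l:=z2)) = 1" using eN z1 z2 n1 n2 by auto
    from P[unfolded prop_ss_def, rule_format, OF eC[OF z1] eC[OF z2] this e'0(1)]
    show ?thesis using that by blast
  qed
  define g where "g a = f ((\<lambda>_. 0)(l:=a))" for a
  have fadd: "\<And>x y. x \<in> ?C \<Longrightarrow> y \<in> ?C \<Longrightarrow> f (sum_add x y) = f x + f y"
    using f by (simp add: dual_sphere_def)
  have fsc: "\<And>x c. x \<in> ?C \<Longrightarrow> f (sum_scale c x) = c * f x"
    using f by (simp add: dual_sphere_def)
  have g_add: "g (a + b) = g a + g b" if "a \<in> E l" "b \<in> E l" for a b
  proof -
    have "(\<lambda>_. 0)(l:=a+b) = sum_add ((\<lambda>_. 0)(l:=a)) ((\<lambda>_. 0)(l:=b))"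
      by (auto simp: sum_add_def)
    then show ?thesis unfolding g_def using fadd eC that by simp
  qed
  have g_sc: "g (c *\<^sub>R a) = c * g a" if "a \<in> E l" for a c
  proof -
    have "(\<lambda>_. 0)(l:=c *\<^sub>R a) = sum_scale c ((\<lambda>_. 0)(l:=a))"
      by (auto simp: sum_scale_def)
    then show ?thesis unfolding g_def using fsc eC that by simp
  qed
  have g_bd: "\<bar>g a\<bar> \<le> 1" if "a \<in> E l" "norm a \<le> 1" for a
    unfolding g_def using ds_bound[OF f eC[OF that(1)]] eN[OF that(1)] that(2) by simp
  have gz1: "g z1 > 1 - e'" using fZ1 by (simp add: slice_def g_def)
  define G where "G = {\<bar>g a\<bar> | a. a \<in> E l \<and> norm a \<le> 1}"
  define c where "c = Sup G"
  have Gb: "bdd_above G" unfolding G_def using g_bd by (intro bdd_aboveI[where M=1]) auto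
  have Gne: "G \<noteq> {}" unfolding G_def using z1 n1 by auto
  have c1: "c \<le> 1" unfolding c_def using Gne g_bd by (intro cSup_least) (auto simp: G_def)
  have cz: "\<bar>g z1\<bar> \<le> c" unfolding c_def using Gb z1 n1 by (intro cSup_upper) (auto simp: G_def)
  have c0: "c > 0" using cz gz1 e'0 by linarith
  define g' where "g' a = g a / c" for a
  have g'ge: "g a \<le> g' a" if "0 \<le> g a" for a
  proof -
    have "g a * c \<le> g a" using that c1 by (simp add: mult_left_le)
    then show ?thesis unfolding g'_def using c0 by (simp add: le_divide_eq)
  qed
  have g'ds: "g' \<in> dual_sphere (E l) (+) scaleR norm"
  proof -
    have add: "\<forall>x\<in>E l. \<forall>y\<in>E l. g' (x + y) = g' x + g' y"
      unfolding g'_def using g_add by (simp add: add_divide_distrib)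
    have sc: "\<forall>x\<in>E l. \<forall>k. g' (k *\<^sub>R x) = k * g' x"
      unfolding g'_def using g_sc by simp
    let ?G' = "{\<bar>g' x\<bar> | x. x \<in> E l \<and> norm x \<le> 1}"
    have up: "\<forall>t\<in>?G'. t \<le> 1"
    proof
      fix t assume "t \<in> ?G'"
      then obtain a where a: "a \<in> E l" "norm a \<le> 1" "t = \<bar>g a\<bar> / c"
        unfolding g'_def using c0 by auto
      have "\<bar>g a\<bar> \<le> c" unfolding c_def using Gb a by (intro cSup_upper) (auto simp: G_def)
      then show "t \<le> 1" using a(3) c0 by simp
    qed
    have bdd: "bdd_above ?G'" using up by (meson bdd_above_def)
    have "Sup ?G' = 1"
    proof (rule cSup_eq_non_empty)
      show "?G' \<noteq> {}" using z1 n1 by auto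
      show "\<And>t. t \<in> ?G' \<Longrightarrow> t \<le> 1" using up by blast
      fix y assume yub: "\<And>t. t \<in> ?G' \<Longrightarrow> t \<le> y"
      have "\<forall>t\<in>G. t \<le> c * y"
      proof
        fix t assume "t \<in> G"
        then obtain a where a: "a \<in> E l" "norm a \<le> 1" "t = \<bar>g a\<bar>" by (auto simp: G_def)
        have "\<bar>g' a\<bar> \<le> y" using yub a by blast
        then show "t \<le> c * y" using a(3) c0 unfolding g'_def by (simp add: divide_le_eq mult.commute)
      qed
      then have "c \<le> c * y" unfolding c_def using Gne by (intro cSup_least) auto
      then show "1 \<le> y" using c0 by simp
    qed
    then show ?thesis using add sc bdd unfolding dual_sphere_def by blast
  qed
  let ?Sl = "slice (E l) norm g' \<epsilon>" and ?S = "slice ?C ?N f e'"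
  have key: "\<exists>s0\<in>?Sl. norm (z2 - s0) \<le> ?N (\<lambda>k. ((\<lambda>_. 0)(l:=z2)) k - x0 k)
       \<and> norm (z2 + s0) \<le> ?N (\<lambda>k. ((\<lambda>_. 0)(l:=z2)) k + x0 k)" if x0: "x0 \<in> ?S" for x0
  proof -
    have x0': "x0 \<in> ?C" "?N x0 \<le> 1" "f x0 > 1 - e'" using x0 by (auto simp: slice_def)
    obtain s0 where s0: "s0 \<in> E l" "norm s0 \<le> 1" "f x0 - 1 + g z1 \<le> g s0"
      "norm (z2 - s0) \<le> ?N (\<lambda>k. ((\<lambda>_. 0)(l:=z2)) k - x0 k)"
      "norm (z2 + s0) \<le> ?N (\<lambda>k. ((\<lambda>_. 0)(l:=z2)) k + x0 k)"
      using forward_key[OF sub l f z1 n1 z2 x0'(1,2)] unfolding g_def by blast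
    have "g s0 > 1 - 2 * e'" using s0(3) x0'(3) gz1 by linarith
    then have "g' s0 > 1 - \<epsilon>" using g'ge[of s0] e'0 by linarith
    then have "s0 \<in> ?Sl" using s0 by (simp add: slice_def)
    then show ?thesis using s0 by blast
  qed
  have Sne: "?S \<noteq> {}" using fZ1 by blast
  have d1: "set_dist (+) scaleR norm z2 ?Sl \<le> set_dist sum_add sum_scale ?N ((\<lambda>_. 0)(l:=z2)) ?S"
    unfolding set_dist_def
  proof (rule inf_le_inf)
    show "\<forall>a\<in>{norm (z2 + (-1) *\<^sub>R s) |s. s \<in> ?Sl}. 0 \<le> a" by auto
    show "{?N (sum_add ((\<lambda>_. 0)(l:=z2)) (sum_scale (- 1) s)) |s. s \<in> ?S} \<noteq> {}" using Sne by auto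
    show "\<forall>b\<in>{?N (sum_add ((\<lambda>_. 0)(l:=z2)) (sum_scale (- 1) s)) |s. s \<in> ?S}.
        \<exists>a\<in>{norm (z2 + (-1) *\<^sub>R s) |s. s \<in> ?Sl}. a \<le> b"
    proof
      fix b assume "b \<in> {?N (sum_add ((\<lambda>_. 0)(l:=z2)) (sum_scale (- 1) s)) |s. s \<in> ?S}"
      then obtain x0 where x0: "x0 \<in> ?S" "b = ?N (sum_add ((\<lambda>_. 0)(l:=z2)) (sum_scale (- 1) x0))" by blast
      have eq: "sum_add ((\<lambda>_. 0)(l:=z2)) (sum_scale (- 1) x0) = (\<lambda>k. ((\<lambda>_. 0)(l:=z2)) k - x0 k)"
        by (auto simp: sum_add_def sum_scale_def)
      obtain s0 where "s0 \<in> ?Sl" "norm (z2 - s0) \<le> ?N (\<lambda>k. ((\<lambda>_. 0)(l:=z2)) k - x0 k)"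
        using key[OF x0(1)] by blast
      then show "\<exists>a\<in>{norm (z2 + (-1) *\<^sub>R s) |s. s \<in> ?Sl}. a \<le> b"
        using x0(2) eq by (metis (mono_tags, lifting) mem_Collect_eq scaleR_minus1_left diff_conv_add_uminus)
    qed
  qed
  have d2: "set_dist (+) scaleR norm z2 (scaleR (-1) ` ?Sl) \<le> set_dist sum_add sum_scale ?N ((\<lambda>_. 0)(l:=z2)) (sum_scale (-1) ` ?S)"
    unfolding set_dist_def
  proof (rule inf_le_inf)
    show "\<forall>a\<in>{norm (z2 + (-1) *\<^sub>R s) |s. s \<in> scaleR (-1) ` ?Sl}. 0 \<le> a" by auto
    show "{?N (sum_add ((\<lambda>_. 0)(l:=z2)) (sum_scale (- 1) s)) |s. s \<in> sum_scale (-1) ` ?S} \<noteq> {}" using Sne by auto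
    show "\<forall>b\<in>{?N (sum_add ((\<lambda>_. 0)(l:=z2)) (sum_scale (- 1) s)) |s. s \<in> sum_scale (-1) ` ?S}.
        \<exists>a\<in>{norm (z2 + (-1) *\<^sub>R s) |s. s \<in> scaleR (-1) ` ?Sl}. a \<le> b"
    proof
      fix b assume "b \<in> {?N (sum_add ((\<lambda>_. 0)(l:=z2)) (sum_scale (- 1) s)) |s. s \<in> sum_scale (-1) ` ?S}"
      then obtain x0 where x0: "x0 \<in> ?S" "b = ?N (sum_add ((\<lambda>_. 0)(l:=z2)) (sum_scale (- 1) (sum_scale (-1) x0)))" by blast
      have eq: "sum_add ((\<lambda>_. 0)(l:=z2)) (sum_scale (- 1) (sum_scale (-1) x0)) = (\<lambda>k. ((\<lambda>_. 0)(l:=z2)) k + x0 k)"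
        by (auto simp: sum_add_def sum_scale_def)
      obtain s0 where s0: "s0 \<in> ?Sl" "norm (z2 + s0) \<le> ?N (\<lambda>k. ((\<lambda>_. 0)(l:=z2)) k + x0 k)"
        using key[OF x0(1)] by blast
      have "(-1) *\<^sub>R s0 \<in> scaleR (-1) ` ?Sl" using s0(1) by blast
      moreover have "norm (z2 + (-1) *\<^sub>R ((-1) *\<^sub>R s0)) = norm (z2 + s0)" by simp
      ultimately show "\<exists>a\<in>{norm (z2 + (-1) *\<^sub>R s) |s. s \<in> scaleR (-1) ` ?Sl}. a \<le> b"
        using x0(2) eq s0(2) by (metis (mono_tags, lifting) mem_Collect_eq)
    qed
  qed
  have z1S: "z1 \<in> ?Sl"
  proof -
    have "g' z1 \<ge> g z1" using g'ge gz1 e'0 by simp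
    then show ?thesis using z1 n1 gz1 e'0 by (simp add: slice_def)
  qed
  show "\<exists>h\<in>dual_sphere (E l) (+) (*\<^sub>R) norm. z1 \<in> slice (E l) norm h \<epsilon> \<and>
          set_dist (+) (*\<^sub>R) norm z2 (slice (E l) norm h \<epsilon>) + set_dist (+) (*\<^sub>R) norm z2 ((*\<^sub>R) (- 1) ` slice (E l) norm h \<epsilon>) < 2 + \<epsilon>"
    using g'ds z1S d1 d2 fd e'0 by (intro bexI[of _ g']) auto
qed



lemma add_in_carrier:
  assumes sub: "\<forall>k\<in>\<Lambda>. subspace (E k)" and x: "x \<in> sum_carrier F \<Lambda> E" and y: "y \<in> sum_carrier F \<Lambda> E"
  shows "(\<lambda>k. x k + y k) \<in> sum_carrier F \<Lambda> E"
proof -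
  have comps: "\<forall>k\<in>\<Lambda>. x k + y k \<in> E k" using sub comp_in[OF x] comp_in[OF y] by (auto intro: subspace_add)
  have outs: "\<forall>k. k \<notin> \<Lambda> \<longrightarrow> x k + y k = 0" using comp_out[OF x] comp_out[OF y] by simp
  show ?thesis
  proof (cases F)
    case C0
    have "finite {k\<in>\<Lambda>. e \<le> norm (x k + y k)}" if e: "e > 0" for e
    proof -
      have hx: "\<forall>\<epsilon>>0. finite {l\<in>\<Lambda>. \<epsilon> \<le> norm (x l)}" and hy: "\<forall>\<epsilon>>0. finite {l\<in>\<Lambda>. \<epsilon> \<le> norm (y l)}"
        using x y C0 by (auto simp: sum_carrier_def)
      have "finite {k\<in>\<Lambda>. e/2 \<le> norm (x k)}" "finite {k\<in>\<Lambda>. e/2 \<le> norm (y k)}"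
        using hx[rule_format, OF half_gt_zero[OF e]] hy[rule_format, OF half_gt_zero[OF e]] by auto
      moreover have "{k\<in>\<Lambda>. e \<le> norm (x k + y k)} \<subseteq> {k\<in>\<Lambda>. e/2 \<le> norm (x k)} \<union> {k\<in>\<Lambda>. e/2 \<le> norm (y k)}"
      proof
        fix k assume "k \<in> {k\<in>\<Lambda>. e \<le> norm (x k + y k)}"
        moreover have "norm (x k + y k) \<le> norm (x k) + norm (y k)" by (rule norm_triangle_ineq)
        ultimately show "k \<in> {k\<in>\<Lambda>. e/2 \<le> norm (x k)} \<union> {k\<in>\<Lambda>. e/2 \<le> norm (y k)}" by auto
      qed
      ultimately show ?thesis by (meson finite_Un finite_subset)
    qed
    then show ?thesis using comps outs C0 unfolding sum_carrier_def by auto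
  next
    case Linf
    obtain Mx where Mx: "\<forall>k\<in>\<Lambda>. norm (x k) \<le> Mx" using x Linf
      by (auto simp: sum_carrier_def bdd_above_def)
    obtain My where My: "\<forall>k\<in>\<Lambda>. norm (y k) \<le> My" using y Linf
      by (auto simp: sum_carrier_def bdd_above_def)
    have "\<forall>k\<in>\<Lambda>. norm (x k + y k) \<le> Mx + My"
      using Mx My by (meson add_mono norm_triangle_ineq order_trans)
    then have "bdd_above ((\<lambda>k. norm (x k + y k)) ` \<Lambda>)" by (auto intro: bdd_aboveI[where M="Mx+My"])
    then show ?thesis using comps outs Linf unfolding sum_carrier_def by auto
  next
    case L1
    have "(\<lambda>k. norm (x k) + norm (y k)) summable_on \<Lambda>"
      using x y L1 by (intro summable_on_add) (auto simp: sum_carrier_def)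
    then have "(\<lambda>k. norm (x k + y k)) summable_on \<Lambda>"
      by (rule summable_on_comparison_test) (auto intro: norm_triangle_ineq)
    then show ?thesis using comps outs L1 unfolding sum_carrier_def by auto
  qed
qed

lemma diff_in_carrier:
  assumes sub: "\<forall>k\<in>\<Lambda>. subspace (E k)" and x: "x \<in> sum_carrier F \<Lambda> E" and y: "y \<in> sum_carrier F \<Lambda> E"
  shows "sum_add x (sum_scale (-1) y) \<in> sum_carrier F \<Lambda> E"
proof -
  have "sum_add x (sum_scale (-1) y) = (\<lambda>k. x k + (\<lambda>k. - y k) k)"
    by (auto simp: sum_add_def sum_scale_def)
  then show ?thesis using add_in_carrier[OF sub x neg_in_carrier(1)[OF sub y]] by simp
qed

lemma set_dist_le:
  assumes sub: "\<forall>k\<in>\<Lambda>. subspace (E k)" and z: "z \<in> sum_carrier F \<Lambda> E"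
    and S: "S \<subseteq> sum_carrier F \<Lambda> E" and x: "x \<in> S"
  shows "set_dist sum_add sum_scale (sum_norm F \<Lambda>) z S \<le> sum_norm F \<Lambda> (sum_add z (sum_scale (-1) x))"
  unfolding set_dist_def
proof (rule cInf_lower)
  show "sum_norm F \<Lambda> (sum_add z (sum_scale (-1) x)) \<in> {sum_norm F \<Lambda> (sum_add z (sum_scale (- 1) s)) |s. s \<in> S}"
    using x by blast
  show "bdd_below {sum_norm F \<Lambda> (sum_add z (sum_scale (- 1) s)) |s. s \<in> S}"
    using norm_nonneg_sum[OF diff_in_carrier[OF sub z]] S
    by (intro bdd_belowI[where m=0]) auto
qed

lemma set_dist_neg_le:
  assumes sub: "\<forall>k\<in>\<Lambda>. subspace (E k)" and z: "z \<in> sum_carrier F \<Lambda> E"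
    and S: "S \<subseteq> sum_carrier F \<Lambda> E" and x: "x \<in> S"
  shows "set_dist sum_add sum_scale (sum_norm F \<Lambda>) z (sum_scale (-1) ` S) \<le> sum_norm F \<Lambda> (\<lambda>k. z k + x k)"
proof -
  have S': "sum_scale (-1) ` S \<subseteq> sum_carrier F \<Lambda> E"
  proof
    fix w assume "w \<in> sum_scale (-1) ` S"
    then obtain s where "s \<in> S" "w = sum_scale (-1) s" by blast
    moreover have "sum_scale (-1) s = (\<lambda>k. - s k)" by (auto simp: sum_scale_def)
    ultimately show "w \<in> sum_carrier F \<Lambda> E" using neg_in_carrier(1)[OF sub] S by auto
  qed
  have "sum_add z (sum_scale (-1) (sum_scale (-1) x)) = (\<lambda>k. z k + x k)"
    by (auto simp: sum_add_def sum_scale_def)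
  then show ?thesis using set_dist_le[OF sub z S', of "sum_scale (-1) x"] x by auto
qed

lemma inf_sum_witness:
  fixes A B :: "real set"
  assumes "A \<noteq> {}" "B \<noteq> {}" "\<forall>a\<in>A. 0 \<le> a" "\<forall>b\<in>B. 0 \<le> b" "Inf A + Inf B < c"
  shows "\<exists>a\<in>A. \<exists>b\<in>B. a + b < c"
proof -
  have bA: "bdd_below A" "bdd_below B" using assms(3,4) by (meson bdd_below_def)+
  have "Inf A < c - Inf B" using assms(5) by simp
  then obtain a where a: "a \<in> A" "a < c - Inf B" using cInf_less_iff[OF assms(1) bA(1)] by blast
  then have "Inf B < c - a" by simp
  then obtain b where b: "b \<in> B" "b < c - a" using cInf_less_iff[OF assms(2) bA(2)] by blast
  show ?thesis using a b by (intro bexI[of _ a] bexI[of _ b]) auto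
qed

lemma dist_witness:
  fixes v :: "'b::real_normed_vector"
  assumes "S \<noteq> {}" "set_dist (+) scaleR norm v S + set_dist (+) scaleR norm v (scaleR (-1) ` S) < c"
  shows "\<exists>s\<in>S. \<exists>s'\<in>S. norm (v - s) + norm (v + s') < c"
proof -
  have ne: "{norm (v + (-1) *\<^sub>R s) |s. s \<in> S} \<noteq> {}" "{norm (v + (-1) *\<^sub>R s) |s. s \<in> scaleR (-1) ` S} \<noteq> {}"
    using assms(1) by auto
  have nn: "\<forall>a\<in>{norm (v + (-1) *\<^sub>R s) |s. s \<in> S}. 0 \<le> a" "\<forall>a\<in>{norm (v + (-1) *\<^sub>R s) |s. s \<in> scaleR (-1) ` S}. 0 \<le> a"
    by auto
  obtain a b where ab: "a \<in> {norm (v + (-1) *\<^sub>R s) |s. s \<in> S}" "b \<in> {norm (v + (-1) *\<^sub>R s) |s. s \<in> scaleR (-1) ` S}" "a + b < c"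
    using inf_sum_witness[OF ne nn] assms(2) unfolding set_dist_def by blast
  from ab(1) obtain s where s: "s \<in> S" "a = norm (v - s)" by auto
  from ab(2) obtain s' where s': "s' \<in> S" "b = norm (v + s')" by auto
  show ?thesis using s s' ab(3) by blast
qed

lemma unit_rescale:
  fixes w :: "'b::real_normed_vector"
  assumes sub: "subspace X" and w: "w \<in> X" and u: "u \<in> X" "norm u = 1"
  defines "v \<equiv> (if w = 0 then u else (1 / norm w) *\<^sub>R w)"
  shows "v \<in> X" "norm v = 1" "w = norm w *\<^sub>R v"
  using assms by (auto simp: subspace_scale)

lemma convex_bound:
  fixes v s s' :: "'b::real_normed_vector"
  assumes t: "0 \<le> t" "t \<le> 1" and s: "norm s \<le> 1" "norm s' \<le> 1"
    and d: "norm (v - s) + norm (v + s') < 2 + \<delta>" and \<delta>: "0 \<le> \<delta>"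
  shows "norm (t *\<^sub>R v - s) + norm (t *\<^sub>R v + s') \<le> 2 + \<delta>"
proof -
  have "t *\<^sub>R v - s = t *\<^sub>R (v - s) - (1 - t) *\<^sub>R s" by (simp add: algebra_simps)
  then have 1: "norm (t *\<^sub>R v - s) \<le> t * norm (v - s) + (1 - t) * norm s"
    using t by (metis abs_of_nonneg diff_ge_0_iff_ge norm_scaleR norm_triangle_ineq4)
  have "t *\<^sub>R v + s' = t *\<^sub>R (v + s') + (1 - t) *\<^sub>R s'" by (simp add: algebra_simps)
  then have 2: "norm (t *\<^sub>R v + s') \<le> t * norm (v + s') + (1 - t) * norm s'"
    using t by (metis abs_of_nonneg diff_ge_0_iff_ge norm_scaleR norm_triangle_ineq)
  have "t * norm (v - s) + t * norm (v + s') \<le> t * (2 + \<delta>)"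
    using t d by (metis distrib_left less_eq_real_def mult_left_mono)
  moreover have "(1 - t) * norm s \<le> 1 - t" "(1 - t) * norm s' \<le> 1 - t"
    using t s by (simp_all add: mult_left_le)
  moreover have "t * (2 + \<delta>) + 2 * (1 - t) \<le> 2 + \<delta>" using t \<delta> by (simp add: algebra_simps mult_left_le)
  ultimately show ?thesis using 1 2 by smt
qed

lemma reverse_sup:
  assumes sub: "\<forall>k\<in>\<Lambda>. subspace (E k)"
    and Ps: "\<forall>l\<in>\<Lambda>. prop_ss (E l) (+) scaleR norm" and F: "F \<noteq> L1"
  shows "prop_ss (sum_carrier F \<Lambda> E) sum_add sum_scale (sum_norm F \<Lambda>)"
  unfolding prop_ss_def
proof (intro ballI impI allI)
  let ?C = "sum_carrier F \<Lambda> E" and ?N = "sum_norm F \<Lambda>"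
  fix z1 z2 and \<epsilon> :: real
  assume z1: "z1 \<in> ?C" and z2: "z2 \<in> ?C" and n1: "?N z1 = 1" and n2: "?N z2 = 1" and \<epsilon>: "\<epsilon> > 0"
  define \<delta> where "\<delta> = min \<epsilon> 1 / 4"
  have \<delta>0: "0 < \<delta>" "\<delta> \<le> 1/4" "4 * \<delta> \<le> \<epsilon>" using \<epsilon> by (auto simp: \<delta>_def)
  obtain l where l: "l \<in> \<Lambda>" "norm (z1 l) > 1 - \<delta>"
  proof -
    let ?T = "insert 0 ((\<lambda>l. norm (z1 l)) ` \<Lambda>)"
    have Tb: "bdd_above ?T" using carrier_bdd[OF z1 F] by simp
    have "1 - \<delta> < Sup ?T"
      using n1 sum_norm_sup[OF F, of \<Lambda> z1] \<delta>0 by simp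
    then obtain t where t: "t \<in> ?T" "1 - \<delta> < t"
      using less_cSup_iff[OF _ Tb] by blast
    then have "t \<noteq> 0" using \<delta>0 by auto
    then obtain k where "k \<in> \<Lambda>" "t = norm (z1 k)" using t(1) by auto
    then show ?thesis using that t(2) by blast
  qed
  have subl: "subspace (E l)" using sub l by simp
  define \<alpha> where "\<alpha> = norm (z1 l)"
  have \<alpha>: "\<alpha> > 1 - \<delta>" "\<alpha> > 0" using l \<delta>0 by (auto simp: \<alpha>_def)
  define u where "u = (1 / \<alpha>) *\<^sub>R z1 l"
  have z1l: "z1 l \<in> E l" using comp_in[OF z1 l(1)] .
  have uE: "u \<in> E l" "norm u = 1" "z1 l = \<alpha> *\<^sub>R u" using \<alpha> z1l subl by (auto simp: u_def \<alpha>_def subspace_scale)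
  have z2l: "z2 l \<in> E l" using comp_in[OF z2 l(1)] .
  define v where "v = (if z2 l = 0 then u else (1 / norm (z2 l)) *\<^sub>R z2 l)"
  have vE: "v \<in> E l" "norm v = 1" "z2 l = norm (z2 l) *\<^sub>R v"
    using unit_rescale[OF subl z2l uE(1,2)] unfolding v_def by auto
  obtain g where g: "g \<in> dual_sphere (E l) (+) scaleR norm" and gu: "u \<in> slice (E l) norm g \<delta>"
    and gd: "set_dist (+) scaleR norm v (slice (E l) norm g \<delta>) + set_dist (+) scaleR norm v (scaleR (-1) ` slice (E l) norm g \<delta>) < 2 + \<delta>"
    using Ps[rule_format, OF l(1), unfolded prop_ss_def, rule_format, OF uE(1) vE(1) uE(2) vE(2) \<delta>0(1)] by blast
  obtain s s' where s: "s \<in> slice (E l) norm g \<delta>" and s': "s' \<in> slice (E l) norm g \<delta>"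
    and ss: "norm (v - s) + norm (v + s') < 2 + \<delta>"
    using dist_witness[OF _ gd] gu by blast
  have sE: "s \<in> E l" "norm s \<le> 1" "g s > 1 - \<delta>" using s by (auto simp: slice_def)
  have s'E: "s' \<in> E l" "norm s' \<le> 1" "g s' > 1 - \<delta>" using s' by (auto simp: slice_def)
  have gadd: "\<forall>x\<in>E l. \<forall>y\<in>E l. g (x + y) = g x + g y" and gsc: "\<forall>x\<in>E l. \<forall>c. g (c *\<^sub>R x) = c * g x"
    using g by (auto simp: dual_sphere_def)
  define f where "f x = g (x l)" for x :: "_ \<Rightarrow> 'b"
  have eC: "\<And>a. a \<in> E l \<Longrightarrow> (\<lambda>_. 0)(l:=a) \<in> ?C" using e_in_carrier[OF sub l(1)] by blast
  have eN: "\<And>a. a \<in> E l \<Longrightarrow> ?N ((\<lambda>_. 0)(l:=a)) = norm a" using norm_e[OF sub l(1)] by blast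
  have fds: "f \<in> dual_sphere ?C sum_add sum_scale ?N"
  proof -
    have add: "\<forall>x\<in>?C. \<forall>y\<in>?C. f (sum_add x y) = f x + f y"
    proof (intro ballI)
      fix x y assume "x \<in> ?C" "y \<in> ?C"
      then show "f (sum_add x y) = f x + f y"
        using gadd comp_in[OF \<open>x \<in> ?C\<close> l(1)] comp_in[OF \<open>y \<in> ?C\<close> l(1)] by (simp add: f_def sum_add_def)
    qed
    have sc: "\<forall>x\<in>?C. \<forall>c. f (sum_scale c x) = c * f x"
    proof (intro ballI allI)
      fix x c assume "x \<in> ?C"
      then show "f (sum_scale c x) = c * f x"
        using gsc comp_in[OF \<open>x \<in> ?C\<close> l(1)] by (simp add: f_def sum_scale_def)
    qed
    have eq: "{\<bar>f x\<bar> | x. x \<in> ?C \<and> ?N x \<le> 1} = {\<bar>g a\<bar> | a. a \<in> E l \<and> norm a \<le> 1}"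
    proof (intro set_eqI iffI)
      fix t assume "t \<in> {\<bar>f x\<bar> | x. x \<in> ?C \<and> ?N x \<le> 1}"
      then obtain x where x: "x \<in> ?C" "?N x \<le> 1" "t = \<bar>g (x l)\<bar>" by (auto simp: f_def)
      then show "t \<in> {\<bar>g a\<bar> | a. a \<in> E l \<and> norm a \<le> 1}"
        using comp_in[OF x(1) l(1)] comp_le_norm[OF x(1) l(1)] by force
    next
      fix t assume "t \<in> {\<bar>g a\<bar> | a. a \<in> E l \<and> norm a \<le> 1}"
      then obtain a where a: "a \<in> E l" "norm a \<le> 1" "t = \<bar>g a\<bar>" by auto
      have "f ((\<lambda>_. 0)(l:=a)) = g a" by (simp add: f_def)
      then show "t \<in> {\<bar>f x\<bar> | x. x \<in> ?C \<and> ?N x \<le> 1}"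
        using a eC[OF a(1)] eN[OF a(1)] by (metis (mono_tags, lifting) mem_Collect_eq)
    qed
    have gb: "bdd_above {\<bar>g a\<bar> | a. a \<in> E l \<and> norm a \<le> 1}" "Sup {\<bar>g a\<bar> | a. a \<in> E l \<and> norm a \<le> 1} = 1"
      using g by (auto simp: dual_sphere_def)
    show ?thesis unfolding dual_sphere_def mem_Collect_eq eq using add sc gb by blast
  qed
  let ?S = "slice ?C ?N f \<epsilon>"
  have z1S: "z1 \<in> ?S"
  proof -
    have "f z1 = \<alpha> * g u" unfolding f_def using uE(3) gsc uE(1) by simp
    moreover have "g u > 1 - \<delta>" using gu by (simp add: slice_def)
    moreover have "(1 - \<delta>) * (1 - \<delta>) \<le> \<alpha> * g u"
      using \<alpha> \<open>g u > 1 - \<delta>\<close> \<delta>0 by (intro mult_mono) auto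
    moreover have "1 - \<epsilon> < (1 - \<delta>) * (1 - \<delta>)" using \<delta>0 by (simp add: algebra_simps) (smt (verit) mult_pos_pos)
    ultimately have "f z1 > 1 - \<epsilon>" by linarith
    then show ?thesis using z1 n1 by (simp add: slice_def)
  qed
  have z2le: "\<forall>k\<in>\<Lambda>. norm (z2 k) \<le> 1" using comp_le_norm[OF z2] n2 by simp
  define x where "x = z2(l:=s)"
  have xC: "x \<in> ?C" unfolding x_def using upd_in_carrier[OF z2 l(1) sE(1)] .
  have xS: "x \<in> ?S"
  proof -
    have "?N x \<le> 1" unfolding sup_norm_le_iff[OF xC F] using z2le sE(2) by (auto simp: x_def)
    moreover have "f x > 1 - \<epsilon>" using sE(3) \<delta>0 by (simp add: f_def x_def)
    ultimately show ?thesis using xC by (simp add: slice_def)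
  qed
  define x' where "x' = (\<lambda>k. - z2 k)(l:=s')"
  have x'C: "x' \<in> ?C" unfolding x'_def using upd_in_carrier[OF neg_in_carrier(1)[OF sub z2] l(1) s'E(1)] .
  have x'S: "x' \<in> ?S"
  proof -
    have "?N x' \<le> 1" unfolding sup_norm_le_iff[OF x'C F] using z2le s'E(2) by (auto simp: x'_def)
    moreover have "f x' > 1 - \<epsilon>" using s'E(3) \<delta>0 by (simp add: f_def x'_def)
    ultimately show ?thesis using x'C by (simp add: slice_def)
  qed
  have Ssub: "?S \<subseteq> ?C" by (auto simp: slice_def)
  have d1: "set_dist sum_add sum_scale ?N z2 ?S \<le> norm (z2 l - s)"
  proof -
    have "sum_add z2 (sum_scale (-1) x) = (\<lambda>_. 0)(l := z2 l - s)"
      by (auto simp: sum_add_def sum_scale_def x_def)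
    moreover have "z2 l - s \<in> E l" using subl z2l sE(1) by (rule subspace_diff)
    ultimately show ?thesis using set_dist_le[OF sub z2 Ssub xS] eN by simp
  qed
  have d2: "set_dist sum_add sum_scale ?N z2 (sum_scale (-1) ` ?S) \<le> norm (z2 l + s')"
  proof -
    have "(\<lambda>k. z2 k + x' k) = (\<lambda>_. 0)(l := z2 l + s')"
      by (auto simp: x'_def)
    moreover have "z2 l + s' \<in> E l" using subl z2l s'E(1) by (rule subspace_add)
    ultimately show ?thesis using set_dist_neg_le[OF sub z2 Ssub x'S] eN by simp
  qed
  have t: "0 \<le> norm (z2 l)" "norm (z2 l) \<le> 1" using z2le l(1) by auto
  have "norm (z2 l - s) + norm (z2 l + s') \<le> 2 + \<delta>"
    using convex_bound[OF t sE(2) s'E(2) ss] \<delta>0 vE(3) by simp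
  then have "set_dist sum_add sum_scale ?N z2 ?S + set_dist sum_add sum_scale ?N z2 (sum_scale (-1) ` ?S) < 2 + \<epsilon>"
    using d1 d2 \<delta>0 by linarith
  then show "\<exists>h\<in>dual_sphere ?C sum_add sum_scale ?N. z1 \<in> slice ?C ?N h \<epsilon> \<and>
      set_dist sum_add sum_scale ?N z2 (slice ?C ?N h \<epsilon>) + set_dist sum_add sum_scale ?N z2 (sum_scale (-1) ` slice ?C ?N h \<epsilon>) < 2 + \<epsilon>"
    using fds z1S by blast
qed



lemma l1_fin_supp:
  assumes sub: "\<forall>k\<in>\<Lambda>. subspace (E k)" and A: "finite A" "A \<subseteq> \<Lambda>"
    and w1: "\<forall>k\<in>A. w k \<in> E k" and w2: "\<forall>k. k \<notin> A \<longrightarrow> w k = 0"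
  shows "w \<in> sum_carrier L1 \<Lambda> E" "sum_norm L1 \<Lambda> w = (\<Sum>k\<in>A. norm (w k))"
proof -
  have "(\<lambda>k. norm (w k)) summable_on \<Lambda> \<longleftrightarrow> (\<lambda>k. norm (w k)) summable_on A"
    by (rule summable_on_cong_neutral) (use w2 A in auto)
  then have s: "(\<lambda>k. norm (w k)) summable_on \<Lambda>" using A by simp
  have "\<forall>k\<in>\<Lambda>. w k \<in> E k" using w1 w2 sub by (metis subspace_0)
  moreover have "\<forall>k. k \<notin> \<Lambda> \<longrightarrow> w k = 0" using w2 A by auto
  ultimately show wC: "w \<in> sum_carrier L1 \<Lambda> E" using s by (simp add: sum_carrier_def)
  have "infsum (\<lambda>k. norm (w k)) (\<Lambda> - A) = infsum (\<lambda>k. 0::real) (\<Lambda> - A)"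
    by (rule infsum_cong) (use w2 in auto)
  then show "sum_norm L1 \<Lambda> w = (\<Sum>k\<in>A. norm (w k))"
    using l1_norm_split[OF wC A] by simp
qed

lemma l1_mass:
  assumes x: "x \<in> sum_carrier L1 \<Lambda> E" and n: "sum_norm L1 \<Lambda> x = 1" and \<delta>: "\<delta> > 0"
  shows "\<exists>A. finite A \<and> A \<subseteq> \<Lambda> \<and> (\<Sum>k\<in>A. norm (x k)) > 1 - \<delta>"
proof -
  have s: "(\<lambda>k. norm (x k)) summable_on \<Lambda>" using x by (simp add: sum_carrier_def)
  obtain A where A: "finite A" "A \<subseteq> \<Lambda>" "dist (\<Sum>k\<in>A. norm (x k)) (infsum (\<lambda>k. norm (x k)) \<Lambda>) \<le> \<delta>/2"
    using infsum_finite_approximation[OF s, of "\<delta>/2"] \<delta> by auto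
  have "infsum (\<lambda>k. norm (x k)) \<Lambda> = 1" using n by (simp add: sum_norm_def)
  then have "(\<Sum>k\<in>A. norm (x k)) > 1 - \<delta>" using A(3) \<delta> unfolding dist_real_def abs_le_iff by linarith
  then show ?thesis using A by blast
qed

lemma reverse_l1:
  assumes sub: "\<forall>k\<in>\<Lambda>. subspace (E k)"
    and Ps: "\<forall>l\<in>\<Lambda>. prop_ss (E l) (+) scaleR norm"
  shows "prop_ss (sum_carrier L1 \<Lambda> E) sum_add sum_scale (sum_norm L1 \<Lambda>)"
  unfolding prop_ss_def
proof (intro ballI impI allI)
  let ?C = "sum_carrier L1 \<Lambda> E" and ?N = "sum_norm L1 \<Lambda>"
  fix z1 z2 and \<epsilon> :: real
  assume z1: "z1 \<in> ?C" and z2: "z2 \<in> ?C" and n1: "?N z1 = 1" and n2: "?N z2 = 1" and \<epsilon>: "\<epsilon> > 0"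
  define \<delta> where "\<delta> = min \<epsilon> 1 / 4"
  have \<delta>0: "0 < \<delta>" "\<delta> \<le> 1/4" "4 * \<delta> \<le> \<epsilon>" using \<epsilon> by (auto simp: \<delta>_def)
  have sq: "1 - \<epsilon> < (1 - \<delta>) * (1 - \<delta>)" using \<delta>0 by (simp add: algebra_simps) (smt (verit) mult_pos_pos)
  obtain A1 where A1: "finite A1" "A1 \<subseteq> \<Lambda>" "(\<Sum>k\<in>A1. norm (z1 k)) > 1 - \<delta>"
    using l1_mass[OF z1 n1 \<delta>0(1)] by blast
  obtain A2 where A2: "finite A2" "A2 \<subseteq> \<Lambda>" "(\<Sum>k\<in>A2. norm (z2 k)) > 1 - \<delta>"
    using l1_mass[OF z2 n2 \<delta>0(1)] by blast
  define A where "A = {k \<in> A1 \<union> A2. z1 k \<noteq> 0 \<or> z2 k \<noteq> 0}"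
  have Afin: "finite A" and A\<Lambda>: "A \<subseteq> \<Lambda>" using A1 A2 by (auto simp: A_def)
  have U: "finite (A1 \<union> A2)" using A1 A2 by simp
  have mass: "(\<Sum>k\<in>A. norm (z1 k)) > 1 - \<delta>" "(\<Sum>k\<in>A. norm (z2 k)) > 1 - \<delta>"
  proof -
    have e1: "(\<Sum>k\<in>A1 \<union> A2. norm (z1 k)) = (\<Sum>k\<in>A. norm (z1 k))"
      by (rule sum.mono_neutral_right[OF U]) (auto simp: A_def)
    have e2: "(\<Sum>k\<in>A1 \<union> A2. norm (z2 k)) = (\<Sum>k\<in>A. norm (z2 k))"
      by (rule sum.mono_neutral_right[OF U]) (auto simp: A_def)
    have "(\<Sum>k\<in>A1. norm (z1 k)) \<le> (\<Sum>k\<in>A1 \<union> A2. norm (z1 k))"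
      by (rule sum_mono2[OF U]) auto
    moreover have "(\<Sum>k\<in>A2. norm (z2 k)) \<le> (\<Sum>k\<in>A1 \<union> A2. norm (z2 k))"
      by (rule sum_mono2[OF U]) auto
    ultimately show "(\<Sum>k\<in>A. norm (z1 k)) > 1 - \<delta>" "(\<Sum>k\<in>A. norm (z2 k)) > 1 - \<delta>"
      using A1(3) A2(3) e1 e2 by linarith+
  qed
  have Ane: "A \<noteq> {}" using mass(1) \<delta>0 by auto
  have subk: "\<And>k. k \<in> A \<Longrightarrow> subspace (E k)" using sub A\<Lambda> by auto
  have z1k: "\<And>k. k \<in> A \<Longrightarrow> z1 k \<in> E k" using comp_in[OF z1] A\<Lambda> by auto
  have z2k: "\<And>k. k \<in> A \<Longrightarrow> z2 k \<in> E k" using comp_in[OF z2] A\<Lambda> by auto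
  define u where "u k = (if z1 k = 0 then (1 / norm (z2 k)) *\<^sub>R z2 k else (1 / norm (z1 k)) *\<^sub>R z1 k)" for k
  have uE: "u k \<in> E k" "norm (u k) = 1" "z1 k = norm (z1 k) *\<^sub>R u k" if k: "k \<in> A" for k
  proof -
    have "z1 k \<noteq> 0 \<or> z2 k \<noteq> 0" using k by (auto simp: A_def)
    then show "u k \<in> E k" "norm (u k) = 1" "z1 k = norm (z1 k) *\<^sub>R u k"
      using subk[OF k] z1k[OF k] z2k[OF k] by (auto simp: u_def subspace_scale)
  qed
  define v where "v k = (if z2 k = 0 then u k else (1 / norm (z2 k)) *\<^sub>R z2 k)" for k
  have vE: "v k \<in> E k" "norm (v k) = 1" "z2 k = norm (z2 k) *\<^sub>R v k" if k: "k \<in> A" for k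
    using unit_rescale[OF subk[OF k] z2k[OF k] uE(1,2)[OF k]] k unfolding v_def by auto
  define P where "P k p \<longleftrightarrow> fst p \<in> dual_sphere (E k) (+) scaleR norm \<and> u k \<in> slice (E k) norm (fst p) \<delta>
     \<and> fst (snd p) \<in> slice (E k) norm (fst p) \<delta> \<and> snd (snd p) \<in> slice (E k) norm (fst p) \<delta>
     \<and> norm (v k - fst (snd p)) + norm (v k + snd (snd p)) < 2 + \<delta>" for k p
  have "\<forall>k\<in>A. \<exists>p. P k p"
  proof
    fix k assume k: "k \<in> A"
    obtain g where g: "g \<in> dual_sphere (E k) (+) scaleR norm" and gu: "u k \<in> slice (E k) norm g \<delta>"
      and gd: "set_dist (+) scaleR norm (v k) (slice (E k) norm g \<delta>) + set_dist (+) scaleR norm (v k) (scaleR (-1) ` slice (E k) norm g \<delta>) < 2 + \<delta>"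
      using Ps[rule_format, of k, unfolded prop_ss_def, rule_format, OF _ uE(1)[OF k] vE(1)[OF k] uE(2)[OF k] vE(2)[OF k] \<delta>0(1)]
        k A\<Lambda> by blast
    obtain s s' where "s \<in> slice (E k) norm g \<delta>" "s' \<in> slice (E k) norm g \<delta>"
      "norm (v k - s) + norm (v k + s') < 2 + \<delta>"
      using dist_witness[OF _ gd] gu by blast
    then have "P k (g, s, s')" using g gu by (simp add: P_def)
    then show "\<exists>p. P k p" by blast
  qed
  then obtain p where p: "\<forall>k\<in>A. P k (p k)" by (rule bchoice[elim_format]) blast
  define G where "G k = fst (p k)" for k
  define sA where "sA k = fst (snd (p k))" for k
  define sB where "sB k = snd (snd (p k))" for k
  have Gds: "\<And>k. k \<in> A \<Longrightarrow> G k \<in> dual_sphere (E k) (+) scaleR norm"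
    and Gu: "\<And>k. k \<in> A \<Longrightarrow> G k (u k) > 1 - \<delta>"
    and sAE: "\<And>k. k \<in> A \<Longrightarrow> sA k \<in> E k \<and> norm (sA k) \<le> 1 \<and> G k (sA k) > 1 - \<delta>"
    and sBE: "\<And>k. k \<in> A \<Longrightarrow> sB k \<in> E k \<and> norm (sB k) \<le> 1 \<and> G k (sB k) > 1 - \<delta>"
    and wit: "\<And>k. k \<in> A \<Longrightarrow> norm (v k - sA k) + norm (v k + sB k) < 2 + \<delta>"
    using p unfolding P_def G_def sA_def sB_def slice_def by auto
  have Gadd: "\<And>k a b. k \<in> A \<Longrightarrow> a \<in> E k \<Longrightarrow> b \<in> E k \<Longrightarrow> G k (a + b) = G k a + G k b"
    using Gds by (simp add: dual_sphere_def)
  have Gsc: "\<And>k a c. k \<in> A \<Longrightarrow> a \<in> E k \<Longrightarrow> G k (c *\<^sub>R a) = c * G k a"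
    using Gds by (simp add: dual_sphere_def)
  have Gbd: "\<And>k a. k \<in> A \<Longrightarrow> a \<in> E k \<Longrightarrow> \<bar>G k a\<bar> \<le> norm a"
    using ds_norm_bound Gds subk by blast
  have G0: "\<And>k. k \<in> A \<Longrightarrow> G k 0 = 0"
  proof -
    fix k assume k: "k \<in> A"
    show "G k 0 = 0" using Gbd[OF k subspace_0[OF subk[OF k]]] by simp
  qed
  define f where "f x = (\<Sum>k\<in>A. G k (x k))" for x :: "_ \<Rightarrow> 'b"
  have compA: "\<And>x k. x \<in> ?C \<Longrightarrow> k \<in> A \<Longrightarrow> x k \<in> E k" using comp_in A\<Lambda> by (metis subsetD)
  have sumA_le: "(\<Sum>k\<in>A. norm (x k)) \<le> ?N x" if x: "x \<in> ?C" for x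
  proof -
    have "0 \<le> infsum (\<lambda>k. norm (x k)) (\<Lambda> - A)" by (simp add: infsum_nonneg)
    then show ?thesis using l1_norm_split[OF x Afin A\<Lambda>] by simp
  qed
  have fb: "\<bar>f x\<bar> \<le> ?N x" if x: "x \<in> ?C" for x
  proof -
    have "\<bar>f x\<bar> \<le> (\<Sum>k\<in>A. \<bar>G k (x k)\<bar>)" unfolding f_def by (rule sum_abs)
    also have "\<dots> \<le> (\<Sum>k\<in>A. norm (x k))" by (rule sum_mono) (use Gbd compA[OF x] in blast)
    also have "\<dots> \<le> ?N x" by (rule sumA_le[OF x])
    finally show ?thesis .
  qed
  have fds: "f \<in> dual_sphere ?C sum_add sum_scale ?N"
  proof -
    have add: "\<forall>x\<in>?C. \<forall>y\<in>?C. f (sum_add x y) = f x + f y"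
    proof (intro ballI)
      fix x y assume x: "x \<in> ?C" and y: "y \<in> ?C"
      have "f (sum_add x y) = (\<Sum>k\<in>A. G k (x k) + G k (y k))"
        unfolding f_def sum_add_def by (rule sum.cong) (use Gadd compA[OF x] compA[OF y] in auto)
      then show "f (sum_add x y) = f x + f y" by (simp add: f_def sum.distrib)
    qed
    have sc: "\<forall>x\<in>?C. \<forall>c. f (sum_scale c x) = c * f x"
    proof (intro ballI allI)
      fix x c assume x: "x \<in> ?C"
      have "f (sum_scale c x) = (\<Sum>k\<in>A. c * G k (x k))"
        unfolding f_def sum_scale_def by (rule sum.cong) (use Gsc compA[OF x] in auto)
      then show "f (sum_scale c x) = c * f x" by (simp add: f_def sum_distrib_left)
    qed
    let ?Sf = "{\<bar>f x\<bar> | x. x \<in> ?C \<and> ?N x \<le> 1}"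
    have up: "\<forall>t\<in>?Sf. t \<le> 1" using fb by fastforce
    have bdd: "bdd_above ?Sf" using up by (meson bdd_above_def)
    have Sfne: "?Sf \<noteq> {}" using z1 n1 by auto
    have le1: "Sup ?Sf \<le> 1" using up Sfne by (intro cSup_least) auto
    obtain k0 where k0: "k0 \<in> A" using Ane by blast
    let ?Sg = "{\<bar>G k0 a\<bar> | a. a \<in> E k0 \<and> norm a \<le> 1}"
    have Sg1: "Sup ?Sg = 1" using Gds[OF k0] by (simp add: dual_sphere_def)
    have "Sup ?Sg \<le> Sup ?Sf"
    proof (rule cSup_least)
      show "?Sg \<noteq> {}" using subk[OF k0] subspace_0 by force
      fix t assume "t \<in> ?Sg"
      then obtain a where a: "a \<in> E k0" "norm a \<le> 1" "t = \<bar>G k0 a\<bar>" by blast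
      have k0\<Lambda>: "k0 \<in> \<Lambda>" using k0 A\<Lambda> by auto
      have eC: "(\<lambda>_. 0)(k0:=a) \<in> ?C" using e_in_carrier[OF sub k0\<Lambda> a(1)] .
      have eN: "?N ((\<lambda>_. 0)(k0:=a)) = norm a" using norm_e[OF sub k0\<Lambda> a(1)] .
      have "f ((\<lambda>_. 0)(k0:=a)) = (\<Sum>k\<in>A. if k = k0 then G k0 a else 0)"
        unfolding f_def by (rule sum.cong) (use G0 in auto)
      also have "\<dots> = G k0 a" using Afin k0 by simp
      finally have "t \<in> ?Sf" using a eC eN by (metis (mono_tags, lifting) mem_Collect_eq)
      then show "t \<le> Sup ?Sf" using bdd by (rule cSup_upper)
    qed
    then have "Sup ?Sf = 1" using le1 Sg1 by simp
    then show ?thesis unfolding dual_sphere_def using add sc bdd by blast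
  qed
  let ?S = "slice ?C ?N f \<epsilon>"
  have z1S: "z1 \<in> ?S"
  proof -
    have "f z1 = (\<Sum>k\<in>A. norm (z1 k) * G k (u k))"
      unfolding f_def by (rule sum.cong[OF refl]) (metis uE(1) uE(3) Gsc)
    also have "\<dots> \<ge> (\<Sum>k\<in>A. norm (z1 k) * (1 - \<delta>))"
      by (rule sum_mono) (metis Gu less_imp_le mult_left_mono norm_ge_zero)
    finally have "f z1 \<ge> (1 - \<delta>) * (\<Sum>k\<in>A. norm (z1 k))" by (simp add: sum_distrib_left mult.commute)
    moreover have "(1 - \<delta>) * (1 - \<delta>) < (1 - \<delta>) * (\<Sum>k\<in>A. norm (z1 k))"
      using mass(1) \<delta>0 by (intro mult_strict_left_mono) auto
    ultimately have "f z1 > 1 - \<epsilon>" using sq by linarith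
    then show ?thesis using z1 n1 by (simp add: slice_def)
  qed
  have B: "(\<Sum>k\<in>A. norm (z2 k)) \<le> 1" using sumA_le[OF z2] n2 by simp
  define R where "R = infsum (\<lambda>k. norm (z2 k)) (\<Lambda> - A)"
  have z2split: "(\<Sum>k\<in>A. norm (z2 k)) + R = 1" using l1_norm_split[OF z2 Afin A\<Lambda>] n2 R_def by simp
  have mk: "(\<lambda>k. if k \<in> A then norm (z2 k) *\<^sub>R t k else 0) \<in> ?S"
    if t: "\<And>k. k \<in> A \<Longrightarrow> t k \<in> E k \<and> norm (t k) \<le> 1 \<and> G k (t k) > 1 - \<delta>" for t
  proof -
    let ?w = "\<lambda>k. if k \<in> A then norm (z2 k) *\<^sub>R t k else 0"
    have w1: "\<forall>k\<in>A. ?w k \<in> E k" using t subk by (auto intro: subspace_scale)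
    have w2: "\<forall>k. k \<notin> A \<longrightarrow> ?w k = 0" by simp
    note wl = l1_fin_supp[OF sub Afin A\<Lambda> w1 w2]
    have "?N ?w = (\<Sum>k\<in>A. norm (z2 k) * norm (t k))" using wl(2) by (rule trans) (rule sum.cong, auto)
    also have "\<dots> \<le> (\<Sum>k\<in>A. norm (z2 k))"
      by (rule sum_mono) (use t in \<open>auto intro: mult_left_le\<close>)
    finally have Nw: "?N ?w \<le> 1" using B by linarith
    have "f ?w = (\<Sum>k\<in>A. norm (z2 k) * G k (t k))"
      unfolding f_def by (rule sum.cong[OF refl]) (use t Gsc in auto)
    also have "\<dots> \<ge> (\<Sum>k\<in>A. norm (z2 k) * (1 - \<delta>))"
      by (rule sum_mono) (metis t less_imp_le mult_left_mono norm_ge_zero)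
    finally have "f ?w \<ge> (1 - \<delta>) * (\<Sum>k\<in>A. norm (z2 k))" by (simp add: sum_distrib_left mult.commute)
    moreover have "(1 - \<delta>) * (1 - \<delta>) < (1 - \<delta>) * (\<Sum>k\<in>A. norm (z2 k))"
      using mass(2) \<delta>0 by (intro mult_strict_left_mono) auto
    ultimately have "f ?w > 1 - \<epsilon>" using sq by linarith
    then show ?thesis using wl(1) Nw by (simp add: slice_def)
  qed
  have nm: "?N (\<lambda>k. z2 k + c *\<^sub>R (if k \<in> A then norm (z2 k) *\<^sub>R t k else 0))
      = (\<Sum>k\<in>A. norm (z2 k) * norm (v k + c *\<^sub>R t k)) + R"
    if t: "\<And>k. k \<in> A \<Longrightarrow> t k \<in> E k" for t c
  proof -
    let ?w = "\<lambda>k. c *\<^sub>R (if k \<in> A then norm (z2 k) *\<^sub>R t k else 0)"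
    have w1: "\<forall>k\<in>A. ?w k \<in> E k" using t subk by (auto intro: subspace_scale)
    have w2: "\<forall>k. k \<notin> A \<longrightarrow> ?w k = 0" by simp
    have wC: "?w \<in> ?C" using l1_fin_supp(1)[OF sub Afin A\<Lambda> w1 w2] .
    have hC: "(\<lambda>k. z2 k + ?w k) \<in> ?C" using add_in_carrier[OF sub z2 wC] .
    have "?N (\<lambda>k. z2 k + ?w k) = (\<Sum>k\<in>A. norm (z2 k + ?w k)) + infsum (\<lambda>k. norm (z2 k + ?w k)) (\<Lambda> - A)"
      using l1_norm_split[OF hC Afin A\<Lambda>] .
    also have "(\<Sum>k\<in>A. norm (z2 k + ?w k)) = (\<Sum>k\<in>A. norm (z2 k) * norm (v k + c *\<^sub>R t k))"
    proof (rule sum.cong[OF refl])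
      fix k assume k: "k \<in> A"
      have "z2 k + ?w k = norm (z2 k) *\<^sub>R (v k + c *\<^sub>R t k)"
        using k vE(3)[OF k] by (simp add: algebra_simps)
      then show "norm (z2 k + ?w k) = norm (z2 k) * norm (v k + c *\<^sub>R t k)" by simp
    qed
    also have "infsum (\<lambda>k. norm (z2 k + ?w k)) (\<Lambda> - A) = R"
      unfolding R_def by (rule infsum_cong) auto
    finally show ?thesis .
  qed
  define x where "x = (\<lambda>k. if k \<in> A then norm (z2 k) *\<^sub>R sA k else 0)"
  define x' where "x' = (\<lambda>k. if k \<in> A then norm (z2 k) *\<^sub>R sB k else 0)"
  have xS: "x \<in> ?S" unfolding x_def by (rule mk) (use sAE in blast)
  have x'S: "x' \<in> ?S" unfolding x'_def by (rule mk) (use sBE in blast)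
  have Ssub: "?S \<subseteq> ?C" by (auto simp: slice_def)
  have d1: "set_dist sum_add sum_scale ?N z2 ?S \<le> (\<Sum>k\<in>A. norm (z2 k) * norm (v k - sA k)) + R"
  proof -
    have "sum_add z2 (sum_scale (-1) x) = (\<lambda>k. z2 k + (-1) *\<^sub>R (if k \<in> A then norm (z2 k) *\<^sub>R sA k else 0))"
      by (simp add: sum_add_def sum_scale_def x_def)
    moreover have "?N (\<lambda>k. z2 k + (-1) *\<^sub>R (if k \<in> A then norm (z2 k) *\<^sub>R sA k else 0))
      = (\<Sum>k\<in>A. norm (z2 k) * norm (v k + (-1) *\<^sub>R sA k)) + R"
      by (rule nm) (use sAE in blast)
    ultimately show ?thesis using set_dist_le[OF sub z2 Ssub xS] by simp
  qed
  have d2: "set_dist sum_add sum_scale ?N z2 (sum_scale (-1) ` ?S) \<le> (\<Sum>k\<in>A. norm (z2 k) * norm (v k + sB k)) + R"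
  proof -
    have "(\<lambda>k. z2 k + x' k) = (\<lambda>k. z2 k + 1 *\<^sub>R (if k \<in> A then norm (z2 k) *\<^sub>R sB k else 0))"
      by (simp add: x'_def)
    moreover have "?N (\<lambda>k. z2 k + 1 *\<^sub>R (if k \<in> A then norm (z2 k) *\<^sub>R sB k else 0))
      = (\<Sum>k\<in>A. norm (z2 k) * norm (v k + 1 *\<^sub>R sB k)) + R"
      by (rule nm) (use sBE in blast)
    ultimately show ?thesis using set_dist_neg_le[OF sub z2 Ssub x'S] by simp
  qed
  have "(\<Sum>k\<in>A. norm (z2 k) * norm (v k - sA k)) + (\<Sum>k\<in>A. norm (z2 k) * norm (v k + sB k))
      = (\<Sum>k\<in>A. norm (z2 k) * (norm (v k - sA k) + norm (v k + sB k)))"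
    by (simp add: sum.distrib[symmetric] distrib_left)
  also have "\<dots> \<le> (\<Sum>k\<in>A. norm (z2 k) * (2 + \<delta>))"
    by (rule sum_mono) (metis wit less_imp_le mult_left_mono norm_ge_zero)
  also have "\<dots> = (2 + \<delta>) * (\<Sum>k\<in>A. norm (z2 k))" by (simp add: sum_distrib_left mult.commute)
  finally have tot: "(\<Sum>k\<in>A. norm (z2 k) * norm (v k - sA k)) + (\<Sum>k\<in>A. norm (z2 k) * norm (v k + sB k))
      \<le> (2 + \<delta>) * (\<Sum>k\<in>A. norm (z2 k))" .
  have "\<delta> * (\<Sum>k\<in>A. norm (z2 k)) \<le> \<delta>" using B \<delta>0 by (simp add: mult_left_le)
  moreover have "(2 + \<delta>) * (\<Sum>k\<in>A. norm (z2 k)) = 2 * (\<Sum>k\<in>A. norm (z2 k)) + \<delta> * (\<Sum>k\<in>A. norm (z2 k))"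
    by (simp add: algebra_simps)
  ultimately have "set_dist sum_add sum_scale ?N z2 ?S + set_dist sum_add sum_scale ?N z2 (sum_scale (-1) ` ?S) < 2 + \<epsilon>"
    using d1 d2 tot z2split \<delta>0 by linarith
  then show "\<exists>h\<in>dual_sphere ?C sum_add sum_scale ?N. z1 \<in> slice ?C ?N h \<epsilon> \<and>
      set_dist sum_add sum_scale ?N z2 (slice ?C ?N h \<epsilon>) + set_dist sum_add sum_scale ?N z2 (sum_scale (-1) ` slice ?C ?N h \<epsilon>) < 2 + \<epsilon>"
    using fds z1S by blast
qed


theorem proposition2p6:
  fixes E :: "'l \<Rightarrow> 'b::banach set" and \<Lambda> :: "'l set" and F :: sum_kind
  assumes "\<forall>l\<in>\<Lambda>. subspace (E l) \<and> closed (E l)"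
  shows "prop_ss (sum_carrier F \<Lambda> E) sum_add sum_scale (sum_norm F \<Lambda>)
           \<longleftrightarrow> (\<forall>l\<in>\<Lambda>. prop_ss_sub (E l))"
proof -
  have sub: "\<forall>k\<in>\<Lambda>. subspace (E k)" using assms by blast
  show ?thesis
  proof
    assume P: "prop_ss (sum_carrier F \<Lambda> E) sum_add sum_scale (sum_norm F \<Lambda>)"
    show "\<forall>l\<in>\<Lambda>. prop_ss_sub (E l)" using forward[OF sub P] by blast
  next
    assume Ps: "\<forall>l\<in>\<Lambda>. prop_ss_sub (E l)"
    show "prop_ss (sum_carrier F \<Lambda> E) sum_add sum_scale (sum_norm F \<Lambda>)"
    proof (cases "F = L1")
      case True
      then show ?thesis using reverse_l1[OF sub Ps] by simp
    next
      case False
      then show ?thesis using reverse_sup[OF sub Ps] by simp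
    qed
  qed
qed

end
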